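(* Let $e_1,e_2,e_3$ be nonzero integers with $e_1+e_2+e_3=0$, $e_1,e_2$ odd and $2\,\|\,e_3$. Let $n$ be an odd positive square-free integer and $\Lambda=(d_1,d_2,d_3)$ with $d_1,d_2,d_3$ square-free divisors of $2e_1e_2e_3n$ and $d_1d_2d_3$ a square. If $D^{(n)}_\Lambda(\mathbb{Q}_2)\ne\emptyset$, then $d_3$ is odd.
   Context: $D^{(n)}_\Lambda\subset\mathbb{P}^3$ (coordinates $(t,u_1,u_2,u_3)$) is defined by $e_1nt^2+d_2u_2^2-d_3u_3^2=0$, $e_2nt^2+d_3u_3^2-d_1u_1^2=0$, $e_3nt^2+d_1u_1^2-d_2u_2^2=0$. $2\,\|\,m$ means $2\mid m$, $4\nmid m$. *)

theory Defs
  imports "HOL-Computational_Algebra.Squarefree" "HOL-Number_Theory.Cong"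
begin

text \<open>p-adic integers Z_p realised as the inverse limit of Z/p^k Z:
  a sequence of integers x with x (k+1) = x k (mod p^k) for all k.\<close>

definition padic_seq :: "int \<Rightarrow> (nat \<Rightarrow> int) \<Rightarrow> bool" where
  "padic_seq p x \<longleftrightarrow> (\<forall>k. [x (Suc k) = x k] (mod p ^ k))"

definition padic_zero :: "int \<Rightarrow> (nat \<Rightarrow> int) \<Rightarrow> bool" where
  "padic_zero p x \<longleftrightarrow> (\<forall>k. [x k = 0] (mod p ^ k))"

definition D_eqs :: "int \<Rightarrow> int \<Rightarrow> int \<Rightarrow> int \<Rightarrow> int \<Rightarrow> int \<Rightarrow> int
    \<Rightarrow> int \<Rightarrow> int \<Rightarrow> int \<Rightarrow> int \<Rightarrow> int \<times> int \<times> int" where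
  "D_eqs e1 e2 e3 n d1 d2 d3 t u1 u2 u3 =
     (e1 * n * t^2 + d2 * u2^2 - d3 * u3^2,
      e2 * n * t^2 + d3 * u3^2 - d1 * u1^2,
      e3 * n * t^2 + d1 * u1^2 - d2 * u2^2)"

text \<open>D^(n)_Lambda(Q_p) is nonempty: there is a point (t:u1:u2:u3) of P^3(Q_p)
  on the variety.  Clearing denominators, this is the same as a nonzero vector
  in Z_p^4 satisfying the three equations in Z_p, i.e. modulo p^k for every k.\<close>

definition D_has_Qp_point :: "int \<Rightarrow> int \<Rightarrow> int \<Rightarrow> int \<Rightarrow> int \<Rightarrow> int \<Rightarrow> int \<Rightarrow> int \<Rightarrow> bool" where
  "D_has_Qp_point p e1 e2 e3 n d1 d2 d3 \<longleftrightarrow>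
     (\<exists>t u1 u2 u3.
        padic_seq p t \<and> padic_seq p u1 \<and> padic_seq p u2 \<and> padic_seq p u3 \<and>
        \<not> (padic_zero p t \<and> padic_zero p u1 \<and> padic_zero p u2 \<and> padic_zero p u3) \<and>
        (\<forall>k. let (a, b, c) = D_eqs e1 e2 e3 n d1 d2 d3 (t k) (u1 k) (u2 k) (u3 k) in
               [a = 0] (mod p ^ k) \<and> [b = 0] (mod p ^ k) \<and> [c = 0] (mod p ^ k)))"

end

theory Submission
  imports Defs
begin

lemma even_sq_iff: "even (a * (b::int)^2) \<longleftrightarrow> even a \<or> even b"
  by (simp add: power2_eq_square)

lemma coreA:
  fixes e1 e3 n d1 d2 d3 f a1 a3 t u1 u2 u3 :: int
  assumes "odd e1" "odd n" "e3 = 2*f" "d1 = 2*a1" "odd a1" "odd d2" "d3 = 2*a3" "odd a3"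
    and h1: "4 dvd e1*n*t^2 + d2*u2^2 - d3*u3^2"
    and h3: "4 dvd e3*n*t^2 + d1*u1^2 - d2*u2^2"
  shows "even t \<and> even u1 \<and> even u2 \<and> even u3"
proof -
  have "2 dvd e3*n*t^2 + d1*u1^2 - d2*u2^2" using h3 by (rule dvd_trans[rotated]) simp
  hence "even (d2*u2^2)" using assms by (simp add: even_sq_iff)
  hence u2: "even u2" using assms by (simp add: even_sq_iff)
  have "2 dvd e1*n*t^2 + d2*u2^2 - d3*u3^2" using h1 by (rule dvd_trans[rotated]) simp
  hence "even (e1*n*t^2)" using assms u2 by (simp add: even_sq_iff)
  hence t: "even t" using assms by (simp add: even_sq_iff)
  obtain t' where t': "t = 2*t'" using t by blast
  obtain v where v: "u2 = 2*v" using u2 by blast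
  have "4 dvd 8*f*n*t'^2 + 2*a1*u1^2 - 4*d2*v^2"
    using h3 assms t' v by (simp add: power2_eq_square algebra_simps)
  hence "4 dvd 2*a1*u1^2 + 4*(2*f*n*t'^2 - d2*v^2)" by (simp add: algebra_simps)
  hence "4 dvd 2*a1*u1^2" by (simp add: dvd_add_left_iff)
  hence "2 dvd a1*u1^2" by (metis mult.assoc mult_2 dvd_mult_cancel_left numeral_Bit0 numeral_One mult_2_right zero_neq_numeral)
  hence u1: "even u1" using assms by (simp add: even_sq_iff)
  have "4 dvd 4*e1*n*t'^2 + 4*d2*v^2 - 2*a3*u3^2"
    using h1 assms t' v by (simp add: power2_eq_square algebra_simps)
  hence "4 dvd 2*a3*u3^2 + 4*(- e1*n*t'^2 - d2*v^2)" by (simp add: algebra_simps dvd_diff_commute)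
  hence "4 dvd 2*a3*u3^2" by (simp add: dvd_add_left_iff)
  hence "2 dvd a3*u3^2" by (metis mult.assoc mult_2 dvd_mult_cancel_left numeral_Bit0 numeral_One mult_2_right zero_neq_numeral)
  hence u3: "even u3" using assms by (simp add: even_sq_iff)
  show ?thesis using t u1 u2 u3 by simp
qed


lemma coreB:
  fixes e2 e3 n d1 d2 d3 f a2 a3 t u1 u2 u3 :: int
  assumes "odd e2" "odd n" "e3 = 2*f" "d2 = 2*a2" "odd a2" "odd d1" "d3 = 2*a3" "odd a3"
    and h2: "4 dvd e2*n*t^2 + d3*u3^2 - d1*u1^2"
    and h3: "4 dvd e3*n*t^2 + d1*u1^2 - d2*u2^2"
  shows "even t \<and> even u1 \<and> even u2 \<and> even u3"
proof -
  have "2 dvd e3*n*t^2 + d1*u1^2 - d2*u2^2" using h3 by (rule dvd_trans[rotated]) simp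
  hence "even (d1*u1^2)" using assms by (simp add: even_sq_iff)
  hence u1: "even u1" using assms by (simp add: even_sq_iff)
  have "2 dvd e2*n*t^2 + d3*u3^2 - d1*u1^2" using h2 by (rule dvd_trans[rotated]) simp
  hence "even (e2*n*t^2)" using assms u1 by (simp add: even_sq_iff)
  hence t: "even t" using assms by (simp add: even_sq_iff)
  obtain t' where t': "t = 2*t'" using t by blast
  obtain v where v: "u1 = 2*v" using u1 by blast
  have "4 dvd 4*e2*n*t'^2 + 2*a3*u3^2 - 4*d1*v^2"
    using h2 assms t' v by (simp add: power2_eq_square algebra_simps)
  hence "4 dvd 2*a3*u3^2 + 4*(e2*n*t'^2 - d1*v^2)" by (simp add: algebra_simps)
  hence "4 dvd 2*a3*u3^2" by (simp add: dvd_add_left_iff)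
  hence "2 dvd a3*u3^2" by (metis mult.assoc mult_2 dvd_mult_cancel_left numeral_Bit0 numeral_One mult_2_right zero_neq_numeral)
  hence u3: "even u3" using assms by (simp add: even_sq_iff)
  have "4 dvd 8*f*n*t'^2 + 4*d1*v^2 - 2*a2*u2^2"
    using h3 assms t' v by (simp add: power2_eq_square algebra_simps)
  hence "4 dvd 2*a2*u2^2 + 4*(- 2*f*n*t'^2 - d1*v^2)" by (simp add: algebra_simps dvd_diff_commute)
  hence "4 dvd 2*a2*u2^2" by (simp add: dvd_add_left_iff)
  hence "2 dvd a2*u2^2" by (metis mult.assoc mult_2 dvd_mult_cancel_left numeral_Bit0 numeral_One mult_2_right zero_neq_numeral)
  hence u2: "even u2" using assms by (simp add: even_sq_iff)
  show ?thesis using t u1 u2 u3 by simp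
qed

lemma sqfree_even:
  fixes d :: int
  assumes "squarefree d" "even d"
  shows "\<exists>a. d = 2*a \<and> odd a"
proof -
  obtain a where a: "d = 2*a" using assms(2) by blast
  have "odd a"
  proof
    assume "even a"
    then obtain b where "a = 2*b" by blast
    hence "(2::int)^2 dvd d" using a by simp
    hence "(2::int) dvd 1" by (rule squarefreeD[OF assms(1)])
    thus False by simp
  qed
  thus ?thesis using a by blast
qed

lemma padic_seq_cong:
  assumes "padic_seq p x" "k \<le> m"
  shows "[x m = x k] (mod p ^ k)"
  using assms(2)
proof (induction m rule: dec_induct)
  case base then show ?case by simp
next
  case (step m)
  have "[x (Suc m) = x m] (mod p ^ m)" using assms(1) unfolding padic_seq_def by blast
  hence "[x (Suc m) = x m] (mod p ^ k)"
    using step.hyps(1) by (meson cong_dvd_modulus le_imp_power_dvd)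
  then show ?case using step.IH by (rule cong_trans)
qed

lemma D_scale:
  "D_eqs e1 e2 e3 n d1 d2 d3 (c*t) (c*u1) (c*u2) (c*u3) =
   (c^2 * fst (D_eqs e1 e2 e3 n d1 d2 d3 t u1 u2 u3),
    c^2 * fst (snd (D_eqs e1 e2 e3 n d1 d2 d3 t u1 u2 u3)),
    c^2 * snd (snd (D_eqs e1 e2 e3 n d1 d2 d3 t u1 u2 u3)))"
  unfolding D_eqs_def prod.sel prod.inject power_mult_distrib
  by (intro conjI; simp only: right_diff_distrib distrib_left mult_ac)


lemma lift_dvd:
  fixes x :: "nat \<Rightarrow> int"
  assumes "padic_seq 2 x" "k \<le> m" "Suc j \<le> k" "2 ^ Suc j dvd x m"
  shows "2 ^ Suc j dvd x k"
proof -
  have "[x m = x k] (mod 2 ^ k)" using padic_seq_cong[OF assms(1,2)] .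
  hence "[x m = x k] (mod 2 ^ Suc j)"
    using assms(3) by (meson cong_dvd_modulus le_imp_power_dvd)
  thus ?thesis using assms(4) cong_dvd_iff by blast
qed

lemma dvd4_cancel:
  fixes A :: int
  assumes "2 ^ m dvd (2 ^ j)\<^sup>2 * A" "2 * j + 2 \<le> m"
  shows "4 dvd A"
proof -
  have m: "(2::int) ^ m = 2 ^ (2*j) * 4 * 2 ^ (m - (2*j+2))"
  proof -
    have "m = 2*j + 2 + (m - (2*j+2))" using assms(2) by simp
    hence "(2::int) ^ m = 2 ^ (2*j) * 2^2 * 2 ^ (m - (2*j+2))" by (metis power_add)
    thus ?thesis by simp
  qed
  have sq: "((2::int) ^ j)\<^sup>2 = 2 ^ (2*j)" by (simp add: power_mult[symmetric] mult.commute)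
  have "(2::int) ^ (2*j) * 4 dvd 2 ^ (2*j) * A"
    using assms(1) unfolding m sq by (meson dvd_mult_left)
  thus ?thesis by simp
qed

theorem lemma3p1:
  fixes e1 e2 e3 n d1 d2 d3 :: int
  assumes "e1 \<noteq> 0" "e2 \<noteq> 0" "e3 \<noteq> 0"
    and "e1 + e2 + e3 = 0"
    and "odd e1" "odd e2"
    and "2 dvd e3" "\<not> 4 dvd e3"
    and "n > 0" "odd n" "squarefree n"
    and "squarefree d1" "squarefree d2" "squarefree d3"
    and "d1 dvd 2 * e1 * e2 * e3 * n" "d2 dvd 2 * e1 * e2 * e3 * n" "d3 dvd 2 * e1 * e2 * e3 * n"
    and "\<exists>r::int. d1 * d2 * d3 = r ^ 2"
    and "D_has_Qp_point 2 e1 e2 e3 n d1 d2 d3"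
  shows "odd d3"
proof (rule ccontr)
  assume "\<not> odd d3"
  hence "even d3" by simp
  then obtain a3 where a3: "d3 = 2*a3" "odd a3" using sqfree_even assms(14) by blast
  obtain f where f: "e3 = 2*f" using assms(7) by blast
  obtain r where r: "d1 * d2 * d3 = r^2" using assms(18) by blast
  have cases: "(\<exists>a1. d1 = 2*a1 \<and> odd a1) \<and> odd d2 \<or> (\<exists>a2. d2 = 2*a2 \<and> odd a2) \<and> odd d1"
  proof (cases "even d1"; cases "even d2")
    assume h: "even d1" "even d2"
    obtain a1 where a1: "d1 = 2*a1" "odd a1" using sqfree_even assms(12) h(1) by blast
    obtain a2 where a2: "d2 = 2*a2" "odd a2" using sqfree_even assms(13) h(2) by blast
    have e: "r^2 = 2 * (4 * (a1*a2*a3))" using r a1 a2 a3 by (simp add: algebra_simps)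
    hence "even r" by (metis dvd_triv_left even_mult_iff power2_eq_square)
    then obtain s where s: "r = 2*s" by blast
    have "s^2 = 2 * (a1*a2*a3)" using e s by (simp add: power2_eq_square algebra_simps)
    hence "even s" by (metis dvd_triv_left even_mult_iff power2_eq_square)
    then obtain w where w: "s = 2*w" by blast
    have "a1*a2*a3 = 2 * w^2" using \<open>s^2 = 2 * (a1*a2*a3)\<close> w by (simp add: power2_eq_square algebra_simps)
    hence "even (a1*a2*a3)" by simp
    thus ?thesis using a1 a2 a3 by simp
  next
    assume h: "odd d1" "odd d2"
    have e: "r^2 = 2 * (d1*d2*a3)" using r a3 by (simp add: algebra_simps)
    hence "even r" by (metis dvd_triv_left even_mult_iff power2_eq_square)
    then obtain s where s: "r = 2*s" by blast
    have "d1*d2*a3 = 2 * s^2" using e s by (simp add: power2_eq_square algebra_simps)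
    hence "even (d1*d2*a3)" by simp
    thus ?thesis using h a3 by simp
  qed (use sqfree_even assms(12,13) in blast)+
  have core: "even t \<and> even u1 \<and> even u2 \<and> even u3"
    if h: "4 dvd fst (D_eqs e1 e2 e3 n d1 d2 d3 t u1 u2 u3)"
          "4 dvd fst (snd (D_eqs e1 e2 e3 n d1 d2 d3 t u1 u2 u3))"
          "4 dvd snd (snd (D_eqs e1 e2 e3 n d1 d2 d3 t u1 u2 u3))" for t u1 u2 u3
    using cases
  proof
    assume c: "(\<exists>a1. d1 = 2*a1 \<and> odd a1) \<and> odd d2"
    then obtain a1 where "d1 = 2*a1" "odd a1" by blast
    then show ?thesis using coreA[of e1 n e3 f d1 a1 d2 d3 a3 t u2 u3 u1] h c a3 f assms(5,10)
      by (simp add: D_eqs_def)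
  next
    assume c: "(\<exists>a2. d2 = 2*a2 \<and> odd a2) \<and> odd d1"
    then obtain a2 where "d2 = 2*a2" "odd a2" by blast
    then show ?thesis using coreB[of e2 n e3 f d2 a2 d1 d3 a3 t u3 u1 u2] h c a3 f assms(6,10)
      by (simp add: D_eqs_def)
  qed
  obtain t u1 u2 u3 where
    pt: "padic_seq 2 t" "padic_seq 2 u1" "padic_seq 2 u2" "padic_seq 2 u3"
    and nz: "\<not> (padic_zero 2 t \<and> padic_zero 2 u1 \<and> padic_zero 2 u2 \<and> padic_zero 2 u3)"
    and eqs: "\<And>k. [fst (D_eqs e1 e2 e3 n d1 d2 d3 (t k) (u1 k) (u2 k) (u3 k)) = 0] (mod 2 ^ k) \<and>
                   [fst (snd (D_eqs e1 e2 e3 n d1 d2 d3 (t k) (u1 k) (u2 k) (u3 k))) = 0] (mod 2 ^ k) \<and>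
                   [snd (snd (D_eqs e1 e2 e3 n d1 d2 d3 (t k) (u1 k) (u2 k) (u3 k))) = 0] (mod 2 ^ k)"
    using assms(19) unfolding D_has_Qp_point_def Let_def by (auto simp: case_prod_beta)
  have desc: "\<forall>k\<ge>j. 2^j dvd t k \<and> 2^j dvd u1 k \<and> 2^j dvd u2 k \<and> 2^j dvd u3 k" for j
  proof (induction j)
    case 0 then show ?case by simp
  next
    case (Suc j)
    show ?case
    proof (intro allI impI)
      fix k assume k: "Suc j \<le> k"
      define m where "m = k + 2*j + 2"
      have "j \<le> m" "k \<le> m" "2*j+2 \<le> m" unfolding m_def by auto
      then obtain y0 y1 y2 y3 where y: "t m = 2^j * y0" "u1 m = 2^j * y1" "u2 m = 2^j * y2" "u3 m = 2^j * y3"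
        using Suc.IH by (meson dvdE)
      have E: "[fst (D_eqs e1 e2 e3 n d1 d2 d3 (t m) (u1 m) (u2 m) (u3 m)) = 0] (mod 2 ^ m) \<and>
                   [fst (snd (D_eqs e1 e2 e3 n d1 d2 d3 (t m) (u1 m) (u2 m) (u3 m))) = 0] (mod 2 ^ m) \<and>
                   [snd (snd (D_eqs e1 e2 e3 n d1 d2 d3 (t m) (u1 m) (u2 m) (u3 m))) = 0] (mod 2 ^ m)"
        using eqs by blast
      have "4 dvd fst (D_eqs e1 e2 e3 n d1 d2 d3 y0 y1 y2 y3)"
           "4 dvd fst (snd (D_eqs e1 e2 e3 n d1 d2 d3 y0 y1 y2 y3))"
           "4 dvd snd (snd (D_eqs e1 e2 e3 n d1 d2 d3 y0 y1 y2 y3))"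
        using E unfolding y D_scale cong_0_iff prod.sel
        using dvd4_cancel \<open>2*j+2 \<le> m\<close> by blast+
      hence ev: "even y0 \<and> even y1 \<and> even y2 \<and> even y3" using core by blast
      have "2^Suc j dvd t m \<and> 2^Suc j dvd u1 m \<and> 2^Suc j dvd u2 m \<and> 2^Suc j dvd u3 m"
        using ev unfolding y by (auto simp: mult_dvd_mono)
      then show "2^Suc j dvd t k \<and> 2^Suc j dvd u1 k \<and> 2^Suc j dvd u2 k \<and> 2^Suc j dvd u3 k"
        using lift_dvd pt \<open>k \<le> m\<close> k by blast
    qed
  qed
  have "padic_zero 2 t \<and> padic_zero 2 u1 \<and> padic_zero 2 u2 \<and> padic_zero 2 u3"
    unfolding padic_zero_def cong_0_iff using desc by blast
  thus False using nz by blast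
qed

end
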